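(* Consider the multi-agent setting described in the context, with parameters $\alpha>0$ and $F\in\mathbb Z_{\ge0}$. Assume: - the set $\mathcal A$ of misbehaving agents is $F$-local; - the digraph $\mathcal D$ is $(2F+1)$-robust. Let $x_{\mathcal N}:[0,t_1)\to\mathbb R^{|\mathcal N|}$ be a trajectory of the normal agents and let $V(x)=\max_k x_k-\min_k x_k$. Then the derivative $\frac{d}{dt}V(x_{\mathcal N}(t))$ exists at almost all $t\in[0,t_1)$. Furthermore, at almost all $t\in[0,t_1)$ with $x_{\mathcal N}(t)\notin\mathrm{span}(\mathbf 1)$, $$\frac{d}{dt}V(x_{\mathcal N}(t))\le-\alpha<0.$$
   Context: Setting. Let $\mathcal D=(\mathcal V,\mathcal E)$ be a digraph with $\mathcal V=\{1,\dots,n\}$ and $n\ge2$. An edge $(i,j)\in\mathcal E$ means that agent $j$ receives information from agent $i$. The in-neighbor set of $i$ is $\mathcal V_i=\{j:(j,i)\in\mathcal E\}$, and $\mathcal J_i=\mathcal V_i\cup\{i\}$. - A nonempty $S\subset\mathcal V$ is $r$-reachable if some $i\in S$ has $|\mathcal V_i\setminus S|\ge r$. - $\mathcal D$ is $r$-robust if for every pair of nonempty disjoint subsets of $\mathcal V$, at least one of them is $r$-reachable. Dynamics and communication. Each agent has a scalar state with $\dot x_i(t)=u_i(t)$. Fix a strictly increasing $g:\mathbb R\to\mathbb R$ (not necessarily continuous). At time $t$, agent $i$ receives from each in-neighbor $j$ a value $g(x^i_j(t))$. The agents are partitioned into normal agents $\mathcal N$ and misbehaving agents $\mathcal A$. -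 A normal agent $j$ sends $g(x_j(t))$ to all its out-neighbors, so $x^i_j=x_j$, and updates via the FTRC protocol. - Misbehaving agents may use arbitrary inputs and may send arbitrary, possibly different, values to different out-neighbors. The only restriction is that $t\mapsto g(x^i_k(t))$ is Lebesgue measurable for all $k\in\mathcal A$ and $i\in\mathcal N$. - $\mathcal A$ is $F$-local if $|\mathcal V_i\cap\mathcal A|\le F$ for every $i\in\mathcal V\setminus\mathcal A$. FTRC protocol for a normal agent $i$ at time $t$: 1. Sort the received values $g(x^i_j(t))$, $j\in\mathcal V_i$. 2. If fewer than $F$ values are strictly larger than $g(x_i(t))$, remove all values strictly larger than $g(x_i(t))$; otherwise remove exactly the $F$ largest values. 3. Likewise, if fewer than $F$ values are strictly smaller than $g(x_i(t))$, remove all values strictly smaller; otherwise remove exactly the $F$ smallest values. 4. With $\mathcal R_i(t)$ the set of agents whose values were removed, set $u_i(t)=\alpha\,\mathrm{sign}\big(\sum_{j\in\mathcal J_i\setminus\mathcal R_i(t)}(g(x^i_j(t))-g(x_i(t)))\big)$, where $x^i_i=x_i$ and $\mathrm{sign}(0)=0$. Trajectories. Write $x_{\mathcal N}=(x_{\mathcal N_1},\dots,x_{\mathcal N_{|\mathcal N|}})^T$ for a fixed ordering of $\mathcal N$. A trajectory of the normal agents on an interval $I\ni0$ is an absolutely continuous $x_{\mathcal N}:I\to\mathbb R^{|\mathcal N|}$ with $\dot x_{\mathcal N_k}(t)=u_{\mathcal N_k}(t)$ for all $k$ and almost every $t\in I$. Here $\mathbf 1$ is the all-ones vector. *)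

theory Defs
  imports "HOL-Analysis.Analysis"
begin

text \<open>Digraph on vertex set V with edge set E; (i,j) in E means j receives from i.\<close>

definition in_nbrs :: "(nat \<times> nat) set \<Rightarrow> nat \<Rightarrow> nat set" where
  "in_nbrs E i = {j. (j, i) \<in> E}"

definition r_reachable :: "(nat \<times> nat) set \<Rightarrow> nat \<Rightarrow> nat set \<Rightarrow> bool" where
  "r_reachable E r S \<longleftrightarrow> S \<noteq> {} \<and> (\<exists>i\<in>S. card (in_nbrs E i - S) \<ge> r)"

definition r_robust :: "nat set \<Rightarrow> (nat \<times> nat) set \<Rightarrow> nat \<Rightarrow> bool" where
  "r_robust V E r \<longleftrightarrow>
     (\<forall>S1 S2. S1 \<subseteq> V \<and> S2 \<subseteq> V \<and> S1 \<noteq> {} \<and> S2 \<noteq> {} \<and> S1 \<inter> S2 = {}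
        \<longrightarrow> r_reachable E r S1 \<or> r_reachable E r S2)"

definition F_local :: "nat set \<Rightarrow> (nat \<times> nat) set \<Rightarrow> nat set \<Rightarrow> nat \<Rightarrow> bool" where
  "F_local V E A F \<longleftrightarrow> (\<forall>i\<in>V - A. card (in_nbrs E i \<inter> A) \<le> F)"

definition abs_continuous_on :: "real set \<Rightarrow> (real \<Rightarrow> real) \<Rightarrow> bool" where
  "abs_continuous_on I f \<longleftrightarrow>
     (\<forall>\<epsilon>>0. \<exists>\<delta>>0. \<forall>(K::nat set) a b.
        finite K \<and> (\<forall>k\<in>K. a k \<le> b k \<and> {a k..b k} \<subseteq> I)
        \<and> (\<forall>k\<in>K. \<forall>l\<in>K. k \<noteq> l \<longrightarrow> {a k<..<b k} \<inter> {a l<..<b l} = {})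
        \<and> (\<Sum>k\<in>K. b k - a k) < \<delta>
        \<longrightarrow> (\<Sum>k\<in>K. \<bar>f (b k) - f (a k)\<bar>) < \<epsilon>)"

text \<open>Among ties, any choice of which agents realise the F largest/smallest values is allowed;
  the resulting sum in step 4 does not depend on that choice.\<close>
definition ftrc_removed :: "nat \<Rightarrow> nat set \<Rightarrow> (nat \<Rightarrow> real) \<Rightarrow> real \<Rightarrow> nat set \<Rightarrow> bool" where
  "ftrc_removed F Vi w v R \<longleftrightarrow>
     (\<exists>Rp Rm. R = Rp \<union> Rm
       \<and> (if card {j\<in>Vi. w j > v} < F then Rp = {j\<in>Vi. w j > v}
          else Rp \<subseteq> Vi \<and> card Rp = F \<and> (\<forall>j\<in>Rp. \<forall>k\<in>Vi - Rp. w k \<le> w j))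
       \<and> (if card {j\<in>Vi. w j < v} < F then Rm = {j\<in>Vi. w j < v}
          else Rm \<subseteq> Vi \<and> card Rm = F \<and> (\<forall>j\<in>Rm. \<forall>k\<in>Vi - Rm. w j \<le> w k)))"

definition ftrc_input :: "real \<Rightarrow> nat \<Rightarrow> nat \<Rightarrow> nat set \<Rightarrow> (nat \<Rightarrow> real) \<Rightarrow> real \<Rightarrow> real \<Rightarrow> bool" where
  "ftrc_input \<alpha> F i Vi w v u \<longleftrightarrow>
     (\<exists>R. ftrc_removed F Vi w v R \<and>
        u = \<alpha> * sgn (\<Sum>j\<in>(insert i Vi) - R. ((w(i := v)) j - v)))"

end

theory Submission imports Defs begin


lemma countable_isolated:
  fixes Z :: "real set"
  shows "countable {t\<in>Z. \<exists>d>0. \<forall>s\<in>Z. s \<noteq> t \<longrightarrow> d \<le> \<bar>s - t\<bar>}" (is "countable ?I")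
proof -
  have "\<forall>t\<in>?I. \<exists>pq. fst pq\<in>\<rat> \<and> snd pq\<in>\<rat> \<and> fst pq<t \<and> t<snd pq \<and> (\<forall>s\<in>Z. fst pq<s \<and> s<snd pq \<longrightarrow> s = t)"
  proof
    fix t assume "t\<in>?I"
    then obtain d where d: "d>0" "\<forall>s\<in>Z. s\<noteq>t \<longrightarrow> d \<le> \<bar>s-t\<bar>" by auto
    obtain p where p: "p\<in>\<rat>" "t-d<p" "p<t" using Rats_dense_in_real[of "t-d" t] d by auto
    obtain q where q: "q\<in>\<rat>" "t<q" "q<t+d" using Rats_dense_in_real[of t "t+d"] d by auto
    have "\<forall>s\<in>Z. p<s \<and> s<q \<longrightarrow> s = t"
    proof (intro ballI impI)
      fix s assume s: "s \<in> Z" "p<s \<and> s<q"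
      have "\<bar>s - t\<bar> < d" using s p q by linarith
      then show "s = t" using d s by force
    qed
    then show "\<exists>pq. fst pq\<in>\<rat> \<and> snd pq\<in>\<rat> \<and> fst pq<t \<and> t<snd pq \<and> (\<forall>s\<in>Z. fst pq<s \<and> s<snd pq \<longrightarrow> s = t)"
      using p q by (intro exI[of _ "(p,q)"]) simp
  qed
  from bchoice[OF this] obtain PQ where PQ: "\<forall>t\<in>?I. fst (PQ t)\<in>\<rat> \<and> snd (PQ t)\<in>\<rat> \<and> fst (PQ t)<t \<and> t<snd (PQ t) \<and> (\<forall>s\<in>Z. fst (PQ t)<s \<and> s<snd (PQ t) \<longrightarrow> s = t)"
    by blast
  have inj: "inj_on PQ ?I"
  proof (rule inj_onI)
    fix t t' assume a: "t \<in> ?I" "t' \<in> ?I" "PQ t = PQ t'"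
    have z: "t' \<in> Z" using a by simp
    have "fst (PQ t') < t' \<and> t' < snd (PQ t')" using PQ a(2) by blast
    then have "fst (PQ t) < t' \<and> t' < snd (PQ t)" using a(3) by simp
    then show "t = t'" using PQ a(1) z by (metis (no_types, lifting))
  qed
  have "PQ ` ?I \<subseteq> \<rat> \<times> \<rat>"
  proof
    fix z assume "z \<in> PQ ` ?I"
    then obtain t where "t \<in> ?I" "z = PQ t" by blast
    then show "z \<in> \<rat> \<times> \<rat>" using PQ by (simp add: mem_Times_iff)
  qed
  moreover have "countable (\<rat> \<times> \<rat> :: (real \<times> real) set)"
    by (simp add: countable_rat)
  ultimately have "countable (PQ ` ?I)" by (rule countable_subset)
  then show ?thesis using inj by (rule countable_image_inj_on)
qed
lemma max_deriv_eq:
  fixes f g :: "real \<Rightarrow> real"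
  assumes f: "(f has_real_derivative a) (at t)" and g: "(g has_real_derivative a) (at t)"
    and eq: "f t = g t"
  shows "((\<lambda>s. max (f s) (g s)) has_real_derivative a) (at t)"
proof -
  let ?qf = "\<lambda>s. (f s - f t) / (s - t)"
  let ?qg = "\<lambda>s. (g s - g t) / (s - t)"
  let ?qm = "\<lambda>s. (max (f s) (g s) - max (f t) (g t)) / (s - t)"
  have lf: "(?qf \<longlongrightarrow> a) (at t)" using f by (simp add: has_field_derivative_iff)
  have lg: "(?qg \<longlongrightarrow> a) (at t)" using g by (simp add: has_field_derivative_iff)
  have b: "norm (?qm s - a) \<le> \<bar>?qf s - a\<bar> + \<bar>?qg s - a\<bar>" for s
  proof (cases "f s \<le> g s")
    case True
    then have "max (f s) (g s) - max (f t) (g t) = g s - g t" using eq by simp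
    then have "norm (?qm s - a) = \<bar>?qg s - a\<bar>" by simp
    then show ?thesis using abs_ge_zero[of "?qf s - a"] by linarith
  next
    case False
    then have "max (f s) (g s) - max (f t) (g t) = f s - f t" using eq by simp
    then have "norm (?qm s - a) = \<bar>?qf s - a\<bar>" by simp
    then show ?thesis using abs_ge_zero[of "?qg s - a"] by linarith
  qed
  have "((\<lambda>s. \<bar>?qf s - a\<bar> + \<bar>?qg s - a\<bar>) \<longlongrightarrow> 0) (at t)"
    using tendsto_add_zero[OF tendsto_rabs_zero[OF LIM_zero[OF lf]] tendsto_rabs_zero[OF LIM_zero[OF lg]]] .
  then have "((\<lambda>s. ?qm s - a) \<longlongrightarrow> 0) (at t)"
    by (rule Lim_null_comparison[rotated]) (intro always_eventually allI, use b in simp)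
  then have "(?qm \<longlongrightarrow> a) (at t)" by (rule LIM_zero_cancel)
  then show ?thesis by (simp add: has_field_derivative_iff)
qed

lemma max_ev_eq_deriv:
  fixes f g :: "real \<Rightarrow> real"
  assumes f: "(f has_real_derivative a) (at t)" and g: "g differentiable (at t)"
    and gt: "f t > g t"
  shows "(\<lambda>s. max (f s) (g s)) differentiable (at t)"
proof -
  have cf: "isCont f t" using DERIV_isCont[OF f] .
  have cg: "isCont g t" using g by (rule differentiable_imp_continuous_within)
  have c: "isCont (\<lambda>s. f s - g s) t" using cf cg by (rule isCont_diff)
  have "((\<lambda>s. f s - g s) \<longlongrightarrow> f t - g t) (at t)" using c by (simp add: isCont_def)
  then have "eventually (\<lambda>s. 0 < f s - g s) (at t)" using gt by (intro order_tendstoD(1)) auto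
  then have "eventually (\<lambda>s. f s - g s > 0) (nhds t)" using gt by (simp add: eventually_nhds_conv_at)
  then have ev: "eventually (\<lambda>s. f s = max (f s) (g s)) (nhds t)"
    by eventually_elim auto
  then have "((\<lambda>s. max (f s) (g s)) has_real_derivative a) (at t)"
    using f DERIV_cong_ev[OF refl ev refl] by simp
  then show ?thesis unfolding real_differentiable_def by blast
qed

lemma max_bad_countable:
  fixes f g :: "real \<Rightarrow> real"
  shows "countable {t. f differentiable (at t) \<and> g differentiable (at t) \<and>
          \<not> (\<lambda>s. max (f s) (g s)) differentiable (at t)}" (is "countable ?B")
proof -
  have "?B \<subseteq> {t\<in>{s. f s = g s}. \<exists>d>0. \<forall>s\<in>{s. f s = g s}. s \<noteq> t \<longrightarrow> d \<le> \<bar>s - t\<bar>}"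
  proof
    fix t assume t: "t \<in> ?B"
    then obtain a b where a: "(f has_real_derivative a) (at t)" and b: "(g has_real_derivative b) (at t)"
      by (auto simp: real_differentiable_def)
    have nd: "\<not> (\<lambda>s. max (f s) (g s)) differentiable (at t)" using t by auto
    have gd: "g differentiable (at t)" and fd: "f differentiable (at t)" using t by auto
    have "\<not> f t > g t" using max_ev_eq_deriv[OF a gd] nd by blast
    moreover have "\<not> g t > f t"
    proof
      assume "g t > f t"
      then have "(\<lambda>s. max (g s) (f s)) differentiable (at t)" using max_ev_eq_deriv[OF b fd] by blast
      then show False using nd by (simp add: max.commute)
    qed
    ultimately have eq: "f t = g t" by auto
    have "a \<noteq> b"
    proof
      assume "a = b"
      then have "((\<lambda>s. max (f s) (g s)) has_real_derivative a) (at t)" using max_deriv_eq[of f a t g] a b eq by simp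
      then show False using nd unfolding real_differentiable_def by blast
    qed
    have h: "((\<lambda>s. f s - g s) has_real_derivative (a - b)) (at t)" using a b by (intro derivative_intros)
    have "\<exists>d>0. \<forall>s. s \<noteq> t \<and> \<bar>s - t\<bar> < d \<longrightarrow> f s \<noteq> g s"
    proof (cases "a - b > 0")
      case True
      obtain d1 where d1: "d1>0" "\<forall>h>0. h < d1 \<longrightarrow> f t - g t < f (t + h) - g (t+h)"
        using DERIV_pos_inc_right[OF h True] by auto
      obtain d2 where d2: "d2>0" "\<forall>h>0. h < d2 \<longrightarrow> f (t - h) - g (t - h) < f t - g t"
        using DERIV_pos_inc_left[OF h True] by auto
      show ?thesis
      proof (intro exI[of _ "min d1 d2"] conjI allI impI)
        show "min d1 d2 > 0" using d1 d2 by auto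
        fix s assume s: "s \<noteq> t \<and> \<bar>s - t\<bar> < min d1 d2"
        show "f s \<noteq> g s"
        proof (cases "s > t")
          case True then show ?thesis using d1(2)[rule_format, of "s - t"] s eq by auto
        next
          case False then show ?thesis using d2(2)[rule_format, of "t - s"] s eq by auto
        qed
      qed
    next
      case False
      then have neg: "a - b < 0" using \<open>a \<noteq> b\<close> by auto
      obtain d1 where d1: "d1>0" "\<forall>h>0. h < d1 \<longrightarrow> f t - g t > f (t + h) - g (t+h)"
        using DERIV_neg_dec_right[OF h neg] by auto
      obtain d2 where d2: "d2>0" "\<forall>h>0. h < d2 \<longrightarrow> f (t - h) - g (t - h) > f t - g t"
        using DERIV_neg_dec_left[OF h neg] by auto
      show ?thesis
      proof (intro exI[of _ "min d1 d2"] conjI allI impI)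
        show "min d1 d2 > 0" using d1 d2 by auto
        fix s assume s: "s \<noteq> t \<and> \<bar>s - t\<bar> < min d1 d2"
        show "f s \<noteq> g s"
        proof (cases "s > t")
          case True then show ?thesis using d1(2)[rule_format, of "s - t"] s eq by auto
        next
          case False then show ?thesis using d2(2)[rule_format, of "t - s"] s eq by auto
        qed
      qed
    qed
    then obtain d where "d>0" "\<forall>s. s \<noteq> t \<and> \<bar>s - t\<bar> < d \<longrightarrow> f s \<noteq> g s" by blast
    then show "t \<in> {t\<in>{s. f s = g s}. \<exists>d>0. \<forall>s\<in>{s. f s = g s}. s \<noteq> t \<longrightarrow> d \<le> \<bar>s - t\<bar>}"
      using eq by (auto intro!: exI[of _ d])
  qed
  then show ?thesis by (rule countable_subset[OF _ countable_isolated])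
qed



lemma ftrc_Rp:
  fixes w :: "nat \<Rightarrow> real" and v :: real
  assumes fin: "finite Vi" and big: "card {j\<in>Vi. w j > v} \<le> F"
    and Rp: "if card {j\<in>Vi. w j > v} < F then Rp = {j\<in>Vi. w j > v}
          else Rp \<subseteq> Vi \<and> card Rp = F \<and> (\<forall>j\<in>Rp. \<forall>k\<in>Vi - Rp. w k \<le> w j)"
  shows "Rp = {j\<in>Vi. w j > v}"
proof (cases "card {j\<in>Vi. w j > v} < F")
  case True then show ?thesis using Rp by simp
next
  case False
  let ?G = "{j\<in>Vi. w j > v}"
  have cG: "card ?G = F" using False big by simp
  have R: "Rp \<subseteq> Vi" "card Rp = F" "\<forall>j\<in>Rp. \<forall>k\<in>Vi - Rp. w k \<le> w j" using Rp False by auto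
  have finR: "finite Rp" using R(1) fin finite_subset by blast
  have sub: "?G \<subseteq> Rp"
  proof
    fix k assume k: "k \<in> ?G"
    show "k \<in> Rp"
    proof (rule ccontr)
      assume "k \<notin> Rp"
      then have "\<forall>j\<in>Rp. w k \<le> w j" using R(3) k by auto
      then have "Rp \<subseteq> ?G"
      proof (intro subsetI)
        fix j assume "\<forall>j\<in>Rp. w k \<le> w j" "j \<in> Rp"
        then have "w k \<le> w j" by blast
        then show "j \<in> ?G" using R(1) k \<open>j \<in> Rp\<close> by auto
      qed
      moreover have "k \<in> ?G - Rp" using k \<open>k \<notin> Rp\<close> by auto
      ultimately have "Rp \<subset> ?G" by blast
      then have "card Rp < card ?G" using fin by (intro psubset_card_mono) auto
      then show False using cG R(2) by simp
    qed
  qed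
  have "card ?G = card Rp" using cG R(2) by simp
  then show ?thesis using sub finR by (metis card_subset_eq)
qed

lemma ftrc_Rm:
  fixes w :: "nat \<Rightarrow> real" and v :: real
  assumes fin: "finite Vi" and big: "card {j\<in>Vi. w j < v} \<le> F"
    and Rm: "if card {j\<in>Vi. w j < v} < F then Rm = {j\<in>Vi. w j < v}
          else Rm \<subseteq> Vi \<and> card Rm = F \<and> (\<forall>j\<in>Rm. \<forall>k\<in>Vi - Rm. w j \<le> w k)"
  shows "Rm = {j\<in>Vi. w j < v}"
proof (cases "card {j\<in>Vi. w j < v} < F")
  case True then show ?thesis using Rm by simp
next
  case False
  let ?G = "{j\<in>Vi. w j < v}"
  have cG: "card ?G = F" using False big by simp
  have R: "Rm \<subseteq> Vi" "card Rm = F" "\<forall>j\<in>Rm. \<forall>k\<in>Vi - Rm. w j \<le> w k" using Rm False by auto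
  have finR: "finite Rm" using R(1) fin finite_subset by blast
  have sub: "?G \<subseteq> Rm"
  proof
    fix k assume k: "k \<in> ?G"
    show "k \<in> Rm"
    proof (rule ccontr)
      assume "k \<notin> Rm"
      then have "\<forall>j\<in>Rm. w j \<le> w k" using R(3) k by auto
      then have "Rm \<subseteq> ?G"
      proof (intro subsetI)
        fix j assume "\<forall>j\<in>Rm. w j \<le> w k" "j \<in> Rm"
        then have "w j \<le> w k" by blast
        then show "j \<in> ?G" using R(1) k \<open>j \<in> Rm\<close> by auto
      qed
      moreover have "k \<in> ?G - Rm" using k \<open>k \<notin> Rm\<close> by auto
      ultimately have "Rm \<subset> ?G" by blast
      then have "card Rm < card ?G" using fin by (intro psubset_card_mono) auto
      then show False using cG R(2) by simp
    qed
  qed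
  have "card ?G = card Rm" using cG R(2) by simp
  then show ?thesis using sub finR by (metis card_subset_eq)
qed

lemma ftrc_max:
  assumes fin: "finite Vi" and iV: "i \<notin> Vi" and big: "card {j\<in>Vi. w j > v} \<le> F"
    and inp: "ftrc_input \<alpha> F i Vi w v u" and ap: "\<alpha> > 0"
  shows "u \<le> 0" "card {j\<in>Vi. w j < v} \<ge> F + 1 \<Longrightarrow> u = - \<alpha>"
proof -
  obtain R where R: "ftrc_removed F Vi w v R"
    and u: "u = \<alpha> * sgn (\<Sum>j\<in>(insert i Vi) - R. ((w(i := v)) j - v))"
    using inp unfolding ftrc_input_def by blast
  obtain Rp Rm where RR: "R = Rp \<union> Rm"
    and Rp: "if card {j\<in>Vi. w j > v} < F then Rp = {j\<in>Vi. w j > v}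
          else Rp \<subseteq> Vi \<and> card Rp = F \<and> (\<forall>j\<in>Rp. \<forall>k\<in>Vi - Rp. w k \<le> w j)"
    and Rm: "if card {j\<in>Vi. w j < v} < F then Rm = {j\<in>Vi. w j < v}
          else Rm \<subseteq> Vi \<and> card Rm = F \<and> (\<forall>j\<in>Rm. \<forall>k\<in>Vi - Rm. w j \<le> w k)"
    using R unfolding ftrc_removed_def by blast
  have Rpe: "Rp = {j\<in>Vi. w j > v}" using ftrc_Rp[OF fin big Rp] .
  let ?T = "insert i Vi - R"
  have finT: "finite ?T" using fin by simp
  have terms: "\<forall>j\<in>?T. (w(i := v)) j - v \<le> 0"
    using Rpe RR by auto
  have s0: "(\<Sum>j\<in>?T. ((w(i := v)) j - v)) \<le> 0" using terms by (intro sum_nonpos) auto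
  then show "u \<le> 0" using u ap by (simp add: mult_nonneg_nonpos sgn_if)
  assume L: "card {j\<in>Vi. w j < v} \<ge> F + 1"
  let ?L = "{j\<in>Vi. w j < v}"
  have finL: "finite ?L" using fin by simp
  have Rm': "Rm \<subseteq> Vi \<and> card Rm = F" using Rm L by (simp split: if_splits)
  have "\<not> ?L \<subseteq> Rm"
  proof
    assume "?L \<subseteq> Rm"
    then have "card ?L \<le> card Rm" using Rm' fin by (intro card_mono) (auto intro: finite_subset)
    then show False using Rm' L by simp
  qed
  then obtain k where k: "k \<in> Vi" "w k < v" "k \<notin> Rm" by blast
  have kT: "k \<in> ?T" using k Rpe RR by auto
  have ki: "k \<noteq> i" using k iV by auto
  have "(\<Sum>j\<in>?T. ((w(i := v)) j - v)) = ((w(i := v)) k - v) + (\<Sum>j\<in>?T - {k}. ((w(i := v)) j - v))"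
    using finT kT by (simp add: sum.remove)
  also have "\<dots> < 0"
  proof -
    have "(\<Sum>j\<in>?T - {k}. ((w(i := v)) j - v)) \<le> 0" using terms by (intro sum_nonpos) auto
    moreover have "(w(i := v)) k - v < 0" using k ki by simp
    ultimately show ?thesis by linarith
  qed
  finally show "u = - \<alpha>" using u by simp
qed

lemma ftrc_min:
  assumes fin: "finite Vi" and iV: "i \<notin> Vi" and big: "card {j\<in>Vi. w j < v} \<le> F"
    and inp: "ftrc_input \<alpha> F i Vi w v u" and ap: "\<alpha> > 0"
  shows "u \<ge> 0" "card {j\<in>Vi. w j > v} \<ge> F + 1 \<Longrightarrow> u = \<alpha>"
proof -
  obtain R where R: "ftrc_removed F Vi w v R"
    and u: "u = \<alpha> * sgn (\<Sum>j\<in>(insert i Vi) - R. ((w(i := v)) j - v))"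
    using inp unfolding ftrc_input_def by blast
  obtain Rp Rm where RR: "R = Rp \<union> Rm"
    and Rp: "if card {j\<in>Vi. w j > v} < F then Rp = {j\<in>Vi. w j > v}
          else Rp \<subseteq> Vi \<and> card Rp = F \<and> (\<forall>j\<in>Rp. \<forall>k\<in>Vi - Rp. w k \<le> w j)"
    and Rm: "if card {j\<in>Vi. w j < v} < F then Rm = {j\<in>Vi. w j < v}
          else Rm \<subseteq> Vi \<and> card Rm = F \<and> (\<forall>j\<in>Rm. \<forall>k\<in>Vi - Rm. w j \<le> w k)"
    using R unfolding ftrc_removed_def by blast
  have Rme: "Rm = {j\<in>Vi. w j < v}" using ftrc_Rm[OF fin big Rm] .
  let ?T = "insert i Vi - R"
  have finT: "finite ?T" using fin by simp
  have terms: "\<forall>j\<in>?T. (w(i := v)) j - v \<ge> 0"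
    using Rme RR by auto
  have s0: "(\<Sum>j\<in>?T. ((w(i := v)) j - v)) \<ge> 0" using terms by (intro sum_nonneg) auto
  then show "u \<ge> 0" using u ap by (simp add: sgn_if)
  assume L: "card {j\<in>Vi. w j > v} \<ge> F + 1"
  let ?L = "{j\<in>Vi. w j > v}"
  have finL: "finite ?L" using fin by simp
  have Rp': "Rp \<subseteq> Vi \<and> card Rp = F" using Rp L by (simp split: if_splits)
  have "\<not> ?L \<subseteq> Rp"
  proof
    assume "?L \<subseteq> Rp"
    then have "card ?L \<le> card Rp" using Rp' fin by (intro card_mono) (auto intro: finite_subset)
    then show False using Rp' L by simp
  qed
  then obtain k where k: "k \<in> Vi" "w k > v" "k \<notin> Rp" by blast
  have kT: "k \<in> ?T" using k Rme RR by auto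
  have ki: "k \<noteq> i" using k iV by auto
  have "(\<Sum>j\<in>?T. ((w(i := v)) j - v)) = ((w(i := v)) k - v) + (\<Sum>j\<in>?T - {k}. ((w(i := v)) j - v))"
    using finT kT by (simp add: sum.remove)
  also have "\<dots> > 0"
  proof -
    have "(\<Sum>j\<in>?T - {k}. ((w(i := v)) j - v)) \<ge> 0" using terms by (intro sum_nonneg) auto
    moreover have "(w(i := v)) k - v > 0" using k ki by simp
    ultimately show ?thesis by linarith
  qed
  finally show "u = \<alpha>" using u by simp
qed



lemma max_set_bad_countable:
  fixes x :: "nat \<Rightarrow> real \<Rightarrow> real"
  assumes "finite S" "S \<noteq> {}"
  shows "countable {t. (\<forall>i\<in>S. x i differentiable (at t)) \<and>
           \<not> (\<lambda>s. Max ((\<lambda>i. x i s) ` S)) differentiable (at t)}"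
  using assms
proof (induction S rule: finite_ne_induct)
  case (singleton a)
  then show ?case by simp
next
  case (insert a S)
  let ?M = "\<lambda>s. Max ((\<lambda>i. x i s) ` S)"
  have eq: "(\<lambda>s. Max ((\<lambda>i. x i s) ` insert a S)) = (\<lambda>s. max (x a s) (?M s))"
    using insert by (simp add: Max_insert)
  have "{t. (\<forall>i\<in>insert a S. x i differentiable (at t)) \<and>
           \<not> (\<lambda>s. Max ((\<lambda>i. x i s) ` insert a S)) differentiable (at t)}
     \<subseteq> {t. (\<forall>i\<in>S. x i differentiable (at t)) \<and> \<not> ?M differentiable (at t)}
       \<union> {t. x a differentiable (at t) \<and> ?M differentiable (at t) \<and>
          \<not> (\<lambda>s. max (x a s) (?M s)) differentiable (at t)}"
    unfolding eq by auto
  moreover have "countable ({t. (\<forall>i\<in>S. x i differentiable (at t)) \<and> \<not> ?M differentiable (at t)}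
       \<union> {t. x a differentiable (at t) \<and> ?M differentiable (at t) \<and>
          \<not> (\<lambda>s. max (x a s) (?M s)) differentiable (at t)})"
    using insert.IH max_bad_countable[of "x a" ?M] by (rule countable_Un)
  ultimately show ?case by (rule countable_subset)
qed

lemma Min_neg_Max:
  fixes A :: "real set"
  assumes "finite A" "A \<noteq> {}"
  shows "Min A = - Max (uminus ` A)"
  using assms
proof (induction A rule: finite_ne_induct)
  case (singleton a) then show ?case by simp
next
  case (insert a A)
  have "Min (insert a A) = min a (Min A)" using insert by (intro Min_insert) auto
  also have "\<dots> = min a (- Max (uminus ` A))" using insert.IH by simp
  also have "\<dots> = - max (-a) (Max (uminus ` A))" by arith
  also have "max (-a) (Max (uminus ` A)) = Max (insert (-a) (uminus ` A))"
    using insert by (intro Max_insert[symmetric]) auto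
  also have "insert (-a) (uminus ` A) = uminus ` insert a A" by simp
  finally show ?case .
qed

lemma Min_fun_eq:
  fixes x :: "nat \<Rightarrow> real \<Rightarrow> real"
  assumes "finite S" "S \<noteq> {}"
  shows "(\<lambda>s. Min ((\<lambda>i. x i s) ` S)) = (\<lambda>s. - Max ((\<lambda>i. - x i s) ` S))"
proof
  fix s
  have "Min ((\<lambda>i. x i s) ` S) = - Max (uminus ` (\<lambda>i. x i s) ` S)"
    using assms by (intro Min_neg_Max) auto
  also have "uminus ` (\<lambda>i. x i s) ` S = (\<lambda>i. - x i s) ` S" by (simp add: image_image)
  finally show "Min ((\<lambda>i. x i s) ` S) = - Max ((\<lambda>i. - x i s) ` S)" .
qed

lemma min_set_bad_countable:
  fixes x :: "nat \<Rightarrow> real \<Rightarrow> real"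
  assumes "finite S" "S \<noteq> {}"
  shows "countable {t. (\<forall>i\<in>S. x i differentiable (at t)) \<and>
           \<not> (\<lambda>s. Min ((\<lambda>i. x i s) ` S)) differentiable (at t)}"
proof -
  have "{t. (\<forall>i\<in>S. x i differentiable (at t)) \<and>
           \<not> (\<lambda>s. Min ((\<lambda>i. x i s) ` S)) differentiable (at t)}
      \<subseteq> {t. (\<forall>i\<in>S. (\<lambda>i s. - x i s) i differentiable (at t)) \<and>
           \<not> (\<lambda>s. Max ((\<lambda>i. (\<lambda>i s. - x i s) i s) ` S)) differentiable (at t)}"
  proof safe
    fix t assume d: "\<forall>i\<in>S. x i differentiable (at t)"
      and nd: "\<not> (\<lambda>s. Min ((\<lambda>i. x i s) ` S)) differentiable (at t)"
    show "\<And>i. i \<in> S \<Longrightarrow> (\<lambda>s. - x i s) differentiable (at t)"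
      using d by (auto intro: differentiable_minus)
    assume "(\<lambda>s. Max ((\<lambda>i. - x i s) ` S)) differentiable (at t)"
    then have "(\<lambda>s. - Max ((\<lambda>i. - x i s) ` S)) differentiable (at t)" by (rule differentiable_minus)
    then show False using nd Min_fun_eq[OF assms, of x] by simp
  qed
  then show ?thesis
    by (rule countable_subset[OF _ max_set_bad_countable[OF assms]])
qed



theorem theorem4:
  fixes n F :: nat and \<alpha> t1 :: real
    and E :: "(nat \<times> nat) set" and N A :: "nat set"
    and g :: "real \<Rightarrow> real"
    and x :: "nat \<Rightarrow> real \<Rightarrow> real"        \<comment> \<open>x i t: state of normal agent i\<close>
    and y :: "nat \<Rightarrow> nat \<Rightarrow> real \<Rightarrow> real"  \<comment> \<open>y i k t: value x^i_k(t) sent by misbehaving k to i\<close>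
  assumes n2: "n \<ge> 2"
    and E_sub: "E \<subseteq> {1..n} \<times> {1..n}"
    and E_irrefl: "\<forall>i. (i, i) \<notin> E"
    and part: "N \<union> A = {1..n}" "N \<inter> A = {}"
    and N_ne: "N \<noteq> {}"
    and alpha_pos: "\<alpha> > 0"
    and g_mono: "strict_mono g"
    and meas: "\<forall>i\<in>N. \<forall>k\<in>A. (\<lambda>t. g (y i k t)) \<in> borel_measurable lebesgue"
    and loc: "F_local {1..n} E A F"
    and rob: "r_robust {1..n} E (2 * F + 1)"
    and ac: "\<forall>i\<in>N. abs_continuous_on {0..<t1} (x i)"
    and traj: "\<forall>i\<in>N. AE t in lebesgue. t \<in> {0..<t1} \<longrightarrow>
               (\<exists>u. (x i has_real_derivative u) (at t) \<and>
                    ftrc_input \<alpha> F i (in_nbrs E i)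
                      (\<lambda>j. g (if j \<in> N then x j t else y i j t)) (g (x i t)) u)"
  shows "(AE t in lebesgue. t \<in> {0..<t1} \<longrightarrow>
            (\<lambda>s. Max ((\<lambda>i. x i s) ` N) - Min ((\<lambda>i. x i s) ` N)) differentiable (at t))
       \<and> (AE t in lebesgue. t \<in> {0..<t1} \<and> (\<exists>i\<in>N. \<exists>j\<in>N. x i t \<noteq> x j t) \<longrightarrow>
            (\<exists>D. ((\<lambda>s. Max ((\<lambda>i. x i s) ` N) - Min ((\<lambda>i. x i s) ` N)) has_real_derivative D) (at t)
                 \<and> D \<le> - \<alpha> \<and> - \<alpha> < 0))"
proof -
  define Mx where "Mx = (\<lambda>s. Max ((\<lambda>i. x i s) ` N))"
  define Mn where "Mn = (\<lambda>s. Min ((\<lambda>i. x i s) ` N))"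
  have finN: "finite N" using part(1) finite_subset[of N "{1..n}"] by auto
  let ?C = "{t. (\<forall>i\<in>N. x i differentiable (at t)) \<and> \<not> Mx differentiable (at t)}
          \<union> {t. (\<forall>i\<in>N. x i differentiable (at t)) \<and> \<not> Mn differentiable (at t)}"
  have cC: "countable ?C" unfolding Mx_def Mn_def
    using max_set_bad_countable[OF finN N_ne, of x] min_set_bad_countable[OF finN N_ne, of x]
    by (rule countable_Un)
  have nC: "?C \<in> null_sets lebesgue"
    by (rule null_sets_completionI[OF countable_imp_null_set_lborel[OF cC]])
  have ae1: "AE t in lebesgue. t \<notin> ?C" by (rule AE_not_in[OF nC])
  have ae2: "AE t in lebesgue. \<forall>i\<in>N. t \<in> {0..<t1} \<longrightarrow>
               (\<exists>u. (x i has_real_derivative u) (at t) \<and>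
                    ftrc_input \<alpha> F i (in_nbrs E i)
                      (\<lambda>j. g (if j \<in> N then x j t else y i j t)) (g (x i t)) u)"
    using eventually_ball_finite[OF finN traj] .
  have finV: "finite (in_nbrs E i)" for i
  proof -
    have "in_nbrs E i \<subseteq> {1..n}" using E_sub unfolding in_nbrs_def by auto
    then show ?thesis using finite_subset by blast
  qed
  have VNA: "in_nbrs E i \<subseteq> N \<union> A" for i
    using E_sub part(1) unfolding in_nbrs_def by auto
  have iV: "i \<notin> in_nbrs E i" for i using E_irrefl unfolding in_nbrs_def by auto
  have locA: "card (in_nbrs E i \<inter> A) \<le> F" if "i \<in> N" for i
    using loc that part unfolding F_local_def by auto
  have gl: "g a < g b \<longleftrightarrow> a < b" for a b using g_mono by (rule strict_mono_less)
  have key: "(t \<in> {0..<t1} \<longrightarrow> (\<lambda>s. Mx s - Mn s) differentiable (at t))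
     \<and> (t \<in> {0..<t1} \<and> (\<exists>i\<in>N. \<exists>j\<in>N. x i t \<noteq> x j t) \<longrightarrow>
         (\<exists>D. ((\<lambda>s. Mx s - Mn s) has_real_derivative D) (at t) \<and> D \<le> - \<alpha> \<and> - \<alpha> < 0))"
    if tC: "t \<notin> ?C" and H: "\<forall>i\<in>N. t \<in> {0..<t1} \<longrightarrow>
               (\<exists>u. (x i has_real_derivative u) (at t) \<and>
                    ftrc_input \<alpha> F i (in_nbrs E i)
                      (\<lambda>j. g (if j \<in> N then x j t else y i j t)) (g (x i t)) u)" for t
  proof (cases "t \<in> {0..<t1}")
    case False then show ?thesis by auto
  next
    case tI: True
    let ?w = "\<lambda>i j. g (if j \<in> N then x j t else y i j t)"
    have "\<forall>i\<in>N. \<exists>u. (x i has_real_derivative u) (at t) \<and>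
                    ftrc_input \<alpha> F i (in_nbrs E i) (?w i) (g (x i t)) u"
      using H tI by blast
    from bchoice[OF this] obtain U where U: "\<forall>i\<in>N. (x i has_real_derivative U i) (at t) \<and>
                    ftrc_input \<alpha> F i (in_nbrs E i) (?w i) (g (x i t)) (U i)"
      by blast
    have xd: "\<forall>i\<in>N. x i differentiable (at t)" using U unfolding real_differentiable_def by blast
    have "Mx differentiable (at t)" using tC xd by blast
    then obtain DM where DM: "(Mx has_real_derivative DM) (at t)" unfolding real_differentiable_def by blast
    have "Mn differentiable (at t)" using tC xd by blast
    then obtain Dm where Dm: "(Mn has_real_derivative Dm) (at t)" unfolding real_differentiable_def by blast
    have DV: "((\<lambda>s. Mx s - Mn s) has_real_derivative (DM - Dm)) (at t)" using DM Dm by (rule DERIV_diff)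
    have leM: "x i s \<le> Mx s" if "i \<in> N" for i s unfolding Mx_def using finN that by auto
    have geM: "Mn s \<le> x i s" if "i \<in> N" for i s unfolding Mn_def using finN that by auto
    have eqM: "U i = DM" if "i \<in> N" "x i t = Mx t" for i
    proof -
      have d: "((\<lambda>s. x i s - Mx s) has_real_derivative (U i - DM)) (at t)"
        using U that DM by (intro DERIV_diff) auto
      have "\<forall>s. \<bar>t - s\<bar> < 1 \<longrightarrow> x i s - Mx s \<le> x i t - Mx t" using leM[OF that(1)] that(2) by auto
      then have "U i - DM = 0" using DERIV_local_max[OF d, of 1] by simp
      then show ?thesis by simp
    qed
    have eqm: "U i = Dm" if "i \<in> N" "x i t = Mn t" for i
    proof -
      have d: "((\<lambda>s. x i s - Mn s) has_real_derivative (U i - Dm)) (at t)"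
        using U that Dm by (intro DERIV_diff) auto
      have "\<forall>s. \<bar>t - s\<bar> < 1 \<longrightarrow> x i t - Mn t \<le> x i s - Mn s" using geM[OF that(1)] that(2) by auto
      then have "U i - Dm = 0" using DERIV_local_min[OF d, of 1] by simp
      then show ?thesis by simp
    qed
    have inp: "ftrc_input \<alpha> F i (in_nbrs E i) (?w i) (g (x i t)) (U i)" if "i \<in> N" for i
      using U that by blast
    have bigM: "card {j\<in>in_nbrs E i. ?w i j > g (x i t)} \<le> F" if "i \<in> N" "x i t = Mx t" for i
    proof -
      have "{j\<in>in_nbrs E i. ?w i j > g (x i t)} \<subseteq> in_nbrs E i \<inter> A"
      proof
        fix j assume j: "j \<in> {j\<in>in_nbrs E i. ?w i j > g (x i t)}"
        show "j \<in> in_nbrs E i \<inter> A"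
        proof (cases "j \<in> N")
          case True
          then have "g (x j t) > g (x i t)" using j by simp
          then have "x j t > x i t" using gl by blast
          then show ?thesis using leM[OF True, of t] that(2) by simp
        next
          case False then show ?thesis using j VNA[of i] by auto
        qed
      qed
      then have "card {j\<in>in_nbrs E i. ?w i j > g (x i t)} \<le> card (in_nbrs E i \<inter> A)"
        using finV[of i] by (intro card_mono) auto
      then show ?thesis using locA[OF that(1)] by linarith
    qed
    have bigm: "card {j\<in>in_nbrs E i. ?w i j < g (x i t)} \<le> F" if "i \<in> N" "x i t = Mn t" for i
    proof -
      have "{j\<in>in_nbrs E i. ?w i j < g (x i t)} \<subseteq> in_nbrs E i \<inter> A"
      proof
        fix j assume j: "j \<in> {j\<in>in_nbrs E i. ?w i j < g (x i t)}"
        show "j \<in> in_nbrs E i \<inter> A"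
        proof (cases "j \<in> N")
          case True
          then have "g (x j t) < g (x i t)" using j by simp
          then have "x j t < x i t" using gl by blast
          then show ?thesis using geM[OF True, of t] that(2) by simp
        next
          case False then show ?thesis using j VNA[of i] by auto
        qed
      qed
      then have "card {j\<in>in_nbrs E i. ?w i j < g (x i t)} \<le> card (in_nbrs E i \<inter> A)"
        using finV[of i] by (intro card_mono) auto
      then show ?thesis using locA[OF that(1)] by linarith
    qed
    have UM: "U i \<le> 0" if "i \<in> N" "x i t = Mx t" for i
      using ftrc_max(1)[OF finV iV bigM[OF that] inp[OF that(1)] alpha_pos] .
    have Um: "U i \<ge> 0" if "i \<in> N" "x i t = Mn t" for i
      using ftrc_min(1)[OF finV iV bigm[OF that] inp[OF that(1)] alpha_pos] .
    let ?S1 = "{i\<in>N. x i t = Mx t}"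
    let ?S2 = "{i\<in>N. x i t = Mn t}"
    have "Mx t \<in> (\<lambda>i. x i t) ` N" unfolding Mx_def using finN N_ne by (intro Max_in) auto
    then obtain i1 where i1: "i1 \<in> ?S1" by auto
    have "Mn t \<in> (\<lambda>i. x i t) ` N" unfolding Mn_def using finN N_ne by (intro Min_in) auto
    then obtain i2 where i2: "i2 \<in> ?S2" by auto
    have diff: "(\<lambda>s. Mx s - Mn s) differentiable (at t)" using DV unfolding real_differentiable_def by blast
    have der: "\<exists>D. ((\<lambda>s. Mx s - Mn s) has_real_derivative D) (at t) \<and> D \<le> - \<alpha> \<and> - \<alpha> < 0"
      if nc: "\<exists>i\<in>N. \<exists>j\<in>N. x i t \<noteq> x j t"
    proof -
      obtain a b where ab: "a \<in> N" "b \<in> N" "x a t \<noteq> x b t" using nc by blast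
      have lt: "Mn t < Mx t" using leM[OF ab(1), of t] leM[OF ab(2), of t] geM[OF ab(1), of t] geM[OF ab(2), of t] ab(3)
        by linarith
      have disj: "?S1 \<inter> ?S2 = {}" using lt by auto
      have s1: "?S1 \<subseteq> {1..n}" "?S1 \<noteq> {}" using part(1) i1 by auto
      have s2: "?S2 \<subseteq> {1..n}" "?S2 \<noteq> {}" using part(1) i2 by auto
      have "r_reachable E (2 * F + 1) ?S1 \<or> r_reachable E (2 * F + 1) ?S2"
        using rob[unfolded r_robust_def, rule_format, of ?S1 ?S2] s1 s2 disj by simp
      then show ?thesis
      proof
        assume "r_reachable E (2 * F + 1) ?S1"
        then obtain i where i: "i \<in> ?S1" and ci: "card (in_nbrs E i - ?S1) \<ge> 2 * F + 1"
          unfolding r_reachable_def by blast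
        let ?P = "(in_nbrs E i - ?S1) \<inter> N"
        let ?Q = "(in_nbrs E i - ?S1) \<inter> A"
        have eqPQ: "in_nbrs E i - ?S1 = ?P \<union> ?Q" using VNA[of i] by auto
        have "card (?P \<union> ?Q) \<le> card ?P + card ?Q" by (rule card_Un_le)
        moreover have "card (in_nbrs E i - ?S1) = card (?P \<union> ?Q)" using eqPQ by (rule arg_cong)
        ultimately have "card (in_nbrs E i - ?S1) \<le> card ?P + card ?Q" by linarith
        moreover have "card ?Q \<le> F"
        proof -
          have "card ?Q \<le> card (in_nbrs E i \<inter> A)" using finV[of i] by (intro card_mono) auto
          moreover have "i \<in> N" using i by simp
          ultimately show ?thesis using locA[of i] by linarith
        qed
        ultimately have cP: "card ?P \<ge> F + 1" using ci by linarith
        have "?P \<subseteq> {j\<in>in_nbrs E i. ?w i j < g (x i t)}"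
        proof
          fix j assume j: "j \<in> ?P"
          then have jN: "j \<in> N" and jne: "x j t \<noteq> Mx t" by auto
          then have "x j t < x i t" using leM[of j t] i by simp
          then show "j \<in> {j\<in>in_nbrs E i. ?w i j < g (x i t)}" using j gl by auto
        qed
        then have "card ?P \<le> card {j\<in>in_nbrs E i. ?w i j < g (x i t)}"
          using finV[of i] by (intro card_mono) auto
        then have "U i = - \<alpha>"
          using ftrc_max(2)[OF finV iV bigM inp alpha_pos, of i] i cP by auto
        then have "DM = - \<alpha>" using eqM i by auto
        moreover have "Dm \<ge> 0" using Um[of i2] eqm[of i2] i2 by auto
        ultimately show ?thesis using DV alpha_pos by (intro exI[of _ "DM - Dm"]) auto
      next
        assume "r_reachable E (2 * F + 1) ?S2"
        then obtain i where i: "i \<in> ?S2" and ci: "card (in_nbrs E i - ?S2) \<ge> 2 * F + 1"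
          unfolding r_reachable_def by blast
        let ?P = "(in_nbrs E i - ?S2) \<inter> N"
        let ?Q = "(in_nbrs E i - ?S2) \<inter> A"
        have eqPQ: "in_nbrs E i - ?S2 = ?P \<union> ?Q" using VNA[of i] by auto
        have "card (?P \<union> ?Q) \<le> card ?P + card ?Q" by (rule card_Un_le)
        moreover have "card (in_nbrs E i - ?S2) = card (?P \<union> ?Q)" using eqPQ by (rule arg_cong)
        ultimately have "card (in_nbrs E i - ?S2) \<le> card ?P + card ?Q" by linarith
        moreover have "card ?Q \<le> F"
        proof -
          have "card ?Q \<le> card (in_nbrs E i \<inter> A)" using finV[of i] by (intro card_mono) auto
          moreover have "i \<in> N" using i by simp
          ultimately show ?thesis using locA[of i] by linarith
        qed
        ultimately have cP: "card ?P \<ge> F + 1" using ci by linarith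
        have "?P \<subseteq> {j\<in>in_nbrs E i. ?w i j > g (x i t)}"
        proof
          fix j assume j: "j \<in> ?P"
          then have jN: "j \<in> N" and jne: "x j t \<noteq> Mn t" by auto
          then have "x j t > x i t" using geM[of j t] i by simp
          then show "j \<in> {j\<in>in_nbrs E i. ?w i j > g (x i t)}" using j gl by auto
        qed
        then have "card ?P \<le> card {j\<in>in_nbrs E i. ?w i j > g (x i t)}"
          using finV[of i] by (intro card_mono) auto
        then have "U i = \<alpha>"
          using ftrc_min(2)[OF finV iV bigm inp alpha_pos, of i] i cP by auto
        then have "Dm = \<alpha>" using eqm i by auto
        moreover have "DM \<le> 0" using UM[of i1] eqM[of i1] i1 by auto
        ultimately show ?thesis using DV alpha_pos by (intro exI[of _ "DM - Dm"]) auto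
      qed
    qed
    show ?thesis using diff der by blast
  qed
  have "AE t in lebesgue. (t \<in> {0..<t1} \<longrightarrow> (\<lambda>s. Mx s - Mn s) differentiable (at t))
     \<and> (t \<in> {0..<t1} \<and> (\<exists>i\<in>N. \<exists>j\<in>N. x i t \<noteq> x j t) \<longrightarrow>
         (\<exists>D. ((\<lambda>s. Mx s - Mn s) has_real_derivative D) (at t) \<and> D \<le> - \<alpha> \<and> - \<alpha> < 0))"
    using ae1 ae2 by eventually_elim (rule key)
  then have "(AE t in lebesgue. t \<in> {0..<t1} \<longrightarrow> (\<lambda>s. Mx s - Mn s) differentiable (at t))
     \<and> (AE t in lebesgue. t \<in> {0..<t1} \<and> (\<exists>i\<in>N. \<exists>j\<in>N. x i t \<noteq> x j t) \<longrightarrow>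
         (\<exists>D. ((\<lambda>s. Mx s - Mn s) has_real_derivative D) (at t) \<and> D \<le> - \<alpha> \<and> - \<alpha> < 0))"
    by (auto elim: eventually_mono)
  then show ?thesis unfolding Mx_def Mn_def .
qed

end
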